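(* Let $V_1,V_2,\ldots$ be pairwise uncorrelated zero-mean random variables, all with the same variance $\sigma^2$, where $0<\sigma<\infty$, and let $T_n := \frac{1}{\sigma\sqrt n}\sum_{k=1}^n V_k$. Let $n_1<n_2<\cdots$ be natural numbers with $\lim_{m\to\infty} n_{m+1}/n_m = 1$. If $T_{n_1},T_{n_2},\ldots$ converges in law to a random variable $T$, then the whole sequence $T_1,T_2,\ldots$ converges in law to $T$. *)

theory Defs
  imports "HOL-Probability.Probability"
begin

definition norm_partial_sum :: "real \<Rightarrow> (nat \<Rightarrow> 'a \<Rightarrow> real) \<Rightarrow> nat \<Rightarrow> 'a \<Rightarrow> real" where
  "norm_partial_sum \<sigma> V n = (\<lambda>x. (1 / (\<sigma> * sqrt (real n))) * (\<Sum>k=1..n. V k x))"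

end

theory Submission
  imports Defs
begin


locale unc = prob_space M for M :: "'a measure" +
  fixes V :: "nat \<Rightarrow> 'a \<Rightarrow> real" and \<sigma> :: real
  assumes meas: "\<And>k. k \<ge> 1 \<Longrightarrow> V k \<in> borel_measurable M"
    and sq_int: "\<And>k. k \<ge> 1 \<Longrightarrow> integrable M (\<lambda>x. (V k x)\<^sup>2)"
    and mean0: "\<And>k. k \<ge> 1 \<Longrightarrow> expectation (V k) = 0"
    and var: "\<And>k. k \<ge> 1 \<Longrightarrow> variance (V k) = \<sigma>\<^sup>2"
    and uncorr: "\<And>i j. i \<ge> 1 \<Longrightarrow> j \<ge> 1 \<Longrightarrow> i \<noteq> j \<Longrightarrow>
        expectation (\<lambda>x. (V i x - expectation (V i)) * (V j x - expectation (V j))) = 0"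
begin

lemma int_prod: assumes "i \<ge> 1" "j \<ge> 1" shows "integrable M (\<lambda>x. V i x * V j x)"
proof (rule Bochner_Integration.integrable_bound)
  show "integrable M (\<lambda>x. (V i x)\<^sup>2 + (V j x)\<^sup>2)" using sq_int assms by auto
  show "(\<lambda>x. V i x * V j x) \<in> borel_measurable M" using meas assms by auto
  have "\<bar>a * b\<bar> \<le> \<bar>a\<^sup>2 + b\<^sup>2\<bar>" for a b :: real
  proof -
    have 1: "2 * (\<bar>a\<bar> * \<bar>b\<bar>) \<le> \<bar>a\<bar>\<^sup>2 + \<bar>b\<bar>\<^sup>2"
      using sum_squares_bound[of "\<bar>a\<bar>" "\<bar>b\<bar>"] by (simp only: mult.assoc)
    have 2: "0 \<le> \<bar>a\<bar> * \<bar>b\<bar>" by simp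
    have 3: "\<bar>a\<bar>\<^sup>2 + \<bar>b\<bar>\<^sup>2 = \<bar>a\<^sup>2 + b\<^sup>2\<bar>" by simp
    show ?thesis unfolding abs_mult using 1 2 3 by linarith
  qed
  then show "AE x in M. norm (V i x * V j x) \<le> norm ((V i x)\<^sup>2 + (V j x)\<^sup>2)" by simp
qed

lemma exp_prod: assumes "i \<ge> 1" "j \<ge> 1"
  shows "expectation (\<lambda>x. V i x * V j x) = (if i = j then \<sigma>\<^sup>2 else 0)"
  using uncorr[OF assms] var[OF assms(1)] mean0 assms by (auto simp: power2_eq_square)

lemma int_sum_sq: assumes "finite A" "0 \<notin> A"
  shows "integrable M (\<lambda>x. (\<Sum>j\<in>A. c j * V j x)\<^sup>2)"
proof -
  have ge: "j \<in> A \<Longrightarrow> j \<ge> 1" for j using assms(2) by (cases j) auto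
  have "(\<lambda>x. (\<Sum>j\<in>A. c j * V j x)\<^sup>2) = (\<lambda>x. \<Sum>i\<in>A. \<Sum>j\<in>A. c i * c j * (V i x * V j x))"
    by (auto simp: power2_eq_square sum_product intro!: ext sum.cong)
  then show ?thesis using int_prod ge by (simp add: integrable_sum)
qed

lemma exp_sum_sq: assumes "finite A" "0 \<notin> A"
  shows "expectation (\<lambda>x. (\<Sum>j\<in>A. c j * V j x)\<^sup>2) = \<sigma>\<^sup>2 * (\<Sum>j\<in>A. (c j)\<^sup>2)"
proof -
  have ge: "j \<in> A \<Longrightarrow> j \<ge> 1" for j using assms(2) by (cases j) auto
  have "(\<lambda>x. (\<Sum>j\<in>A. c j * V j x)\<^sup>2) = (\<lambda>x. \<Sum>i\<in>A. \<Sum>j\<in>A. c i * c j * (V i x * V j x))"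
    by (auto simp: power2_eq_square sum_product intro!: ext sum.cong)
  then have "expectation (\<lambda>x. (\<Sum>j\<in>A. c j * V j x)\<^sup>2) = (\<Sum>i\<in>A. \<Sum>j\<in>A. c i * c j * expectation (\<lambda>x. V i x * V j x))"
    using int_prod ge by (simp add: Bochner_Integration.integral_sum integrable_sum)
  also have "\<dots> = (\<Sum>i\<in>A. \<Sum>j\<in>A. c i * c j * (if i = j then \<sigma>\<^sup>2 else 0))"
    using exp_prod ge by (intro sum.cong) auto
  also have "\<dots> = \<sigma>\<^sup>2 * (\<Sum>j\<in>A. (c j)\<^sup>2)"
  proof (rule sum.cong[OF refl, THEN trans])
    fix i assume "i \<in> A"
    have e: "(\<lambda>j. c i * c j * (if i = j then \<sigma>\<^sup>2 else 0)) = (\<lambda>j. if i = j then c i * c i * \<sigma>\<^sup>2 else 0)"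
      by auto
    show "(\<Sum>j\<in>A. c i * c j * (if i = j then \<sigma>\<^sup>2 else 0)) = \<sigma>\<^sup>2 * (c i)\<^sup>2"
      unfolding e using \<open>i \<in> A\<close> assms(1) by (simp add: power2_eq_square)
  next
    show "(\<Sum>i\<in>A. \<sigma>\<^sup>2 * (c i)\<^sup>2) = \<sigma>\<^sup>2 * (\<Sum>j\<in>A. (c j)\<^sup>2)"
      by (simp add: sum_distrib_left)
  qed
  finally show ?thesis .
qed


abbreviation "TT \<equiv> norm_partial_sum \<sigma> V"

lemma TT_meas[measurable]: "TT k \<in> borel_measurable M"
proof -
  have "(\<lambda>x. \<Sum>j=1..k. V j x) \<in> borel_measurable M"
    by (rule borel_measurable_sum) (simp add: meas)
  then show ?thesis unfolding norm_partial_sum_def by measurable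
qed

lemma cdf_eq: assumes [measurable]: "f \<in> borel_measurable M"
  shows "cdf (distr M borel f) y = prob {x\<in>space M. f x \<le> y}"
  unfolding cdf_def by (subst measure_distr) (auto intro!: arg_cong[where f=prob])

lemma sq_le: "(d::real) \<le> \<bar>u\<bar> \<Longrightarrow> 0 \<le> d \<Longrightarrow> d\<^sup>2 \<le> u\<^sup>2"
  using power_mono[of d "\<bar>u\<bar>" 2] by simp

lemma ev1: assumes "0 < d"
  shows "prob {x\<in>space M. TT k x \<le> y} \<le> prob {x\<in>space M. TT p x \<le> y + d}
           + prob {x\<in>space M. d\<^sup>2 \<le> (TT k x - TT p x)\<^sup>2}"
proof -
  have "prob {x\<in>space M. TT k x \<le> y} \<le> prob ({x\<in>space M. TT p x \<le> y + d} \<union> {x\<in>space M. d\<^sup>2 \<le> (TT k x - TT p x)\<^sup>2})"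
    using assms by (intro finite_measure_mono) (auto intro!: sq_le)
  also have "\<dots> \<le> prob {x\<in>space M. TT p x \<le> y + d} + prob {x\<in>space M. d\<^sup>2 \<le> (TT k x - TT p x)\<^sup>2}"
    by (intro measure_Un_le) auto
  finally show ?thesis .
qed

lemma ev2: assumes "0 < d"
  shows "prob {x\<in>space M. TT p x \<le> y - d} \<le> prob {x\<in>space M. TT k x \<le> y}
           + prob {x\<in>space M. d\<^sup>2 \<le> (TT k x - TT p x)\<^sup>2}"
proof -
  have "prob {x\<in>space M. TT p x \<le> y - d} \<le> prob ({x\<in>space M. TT k x \<le> y} \<union> {x\<in>space M. d\<^sup>2 \<le> (TT k x - TT p x)\<^sup>2})"
    using assms by (intro finite_measure_mono) (auto intro!: sq_le)
  also have "\<dots> \<le> prob {x\<in>space M. TT k x \<le> y} + prob {x\<in>space M. d\<^sup>2 \<le> (TT k x - TT p x)\<^sup>2}"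
    by (intro measure_Un_le) auto
  finally show ?thesis .
qed


lemma diff_repr: assumes "1 \<le> p" "p \<le> k"
  shows "TT k x - TT p x = (\<Sum>j\<in>{1..k}. (if j \<le> p then 1/(\<sigma> * sqrt k) - 1/(\<sigma> * sqrt p) else 1/(\<sigma> * sqrt k)) * V j x)"
proof -
  have U: "{1..k} = {1..p} \<union> {Suc p..k}" "{1..p} \<inter> {Suc p..k} = {}" using assms by auto
  have "(\<Sum>j\<in>{1..k}. (if j \<le> p then 1/(\<sigma> * sqrt k) - 1/(\<sigma> * sqrt p) else 1/(\<sigma> * sqrt k)) * V j x)
     = (\<Sum>j\<in>{1..p}. (1/(\<sigma> * sqrt k) - 1/(\<sigma> * sqrt p)) * V j x) + (\<Sum>j\<in>{Suc p..k}. 1/(\<sigma> * sqrt k) * V j x)"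
    unfolding U(1) by (subst sum.union_disjoint) (use U(2) in auto)
  also have "\<dots> = 1/(\<sigma> * sqrt k) * ((\<Sum>j\<in>{1..p}. V j x) + (\<Sum>j\<in>{Suc p..k}. V j x)) - 1/(\<sigma> * sqrt p) * (\<Sum>j\<in>{1..p}. V j x)"
    by (simp add: left_diff_distrib sum_subtractf sum_distrib_left distrib_left)
  also have "(\<Sum>j\<in>{1..p}. V j x) + (\<Sum>j\<in>{Suc p..k}. V j x) = (\<Sum>j\<in>{1..k}. V j x)"
    unfolding U(1) by (subst sum.union_disjoint) (use U(2) in auto)
  finally show ?thesis unfolding norm_partial_sum_def by simp
qed

lemma diff_exp: assumes "1 \<le> p" "p \<le> k" "0 < \<sigma>"
  shows "expectation (\<lambda>x. (TT k x - TT p x)\<^sup>2) \<le> 2 * (real k - real p) / real k"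
proof -
  define a where "a = 1/(\<sigma> * sqrt k) - 1/(\<sigma> * sqrt p)"
  define b where "b = 1/(\<sigma> * sqrt k)"
  have U: "{1..k} = {1..p} \<union> {Suc p..k}" "{1..p} \<inter> {Suc p..k} = {}" using assms by auto
  have "expectation (\<lambda>x. (TT k x - TT p x)\<^sup>2) = \<sigma>\<^sup>2 * (\<Sum>j\<in>{1..k}. (if j \<le> p then a else b)\<^sup>2)"
    unfolding diff_repr[OF assms(1,2)] a_def b_def by (rule exp_sum_sq) auto
  also have "(\<Sum>j\<in>{1..k}. (if j \<le> p then a else b)\<^sup>2) = (\<Sum>j\<in>{1..p}. a\<^sup>2) + (\<Sum>j\<in>{Suc p..k}. b\<^sup>2)"
    unfolding U(1) by (subst sum.union_disjoint) (use U(2) in \<open>auto intro!: arg_cong2[where f="(+)"] sum.cong\<close>)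
  also have "\<dots> = real p * a\<^sup>2 + (real k - real p) * b\<^sup>2" using assms by (simp add: of_nat_diff)
  finally have E: "expectation (\<lambda>x. (TT k x - TT p x)\<^sup>2) = \<sigma>\<^sup>2 * (real p * a\<^sup>2 + (real k - real p) * b\<^sup>2)" .
  define s where "s = sqrt p"
  define r where "r = sqrt k"
  have s: "s > 0" "s\<^sup>2 = real p" using assms unfolding s_def by auto
  have r: "r > 0" "r\<^sup>2 = real k" using assms unfolding r_def by auto
  have sr: "s \<le> r" unfolding s_def r_def using assms by simp
  have "\<sigma>\<^sup>2 * (real p * a\<^sup>2 + (real k - real p) * b\<^sup>2) = 2 - 2 * (s / r)"
  proof -
    have ab: "a = 1/(\<sigma> * r) - 1/(\<sigma> * s)" "b = 1/(\<sigma> * r)" unfolding a_def b_def r_def s_def by auto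
    show ?thesis unfolding ab s(2)[symmetric] r(2)[symmetric]
      using s(1) r(1) assms(3) by (simp add: field_simps power2_eq_square)
  qed
  also have "\<dots> \<le> 2 - 2 * (s / r)\<^sup>2"
  proof -
    have "0 \<le> s / r" "s / r \<le> 1" using s r sr by auto
    then have "(s/r) * (s/r) \<le> s / r" using mult_left_le[of "s/r" "s/r"] by simp
    then have "(s/r)\<^sup>2 \<le> s / r" by (simp only: power2_eq_square)
    then show ?thesis by simp
  qed
  also have "\<dots> = 2 * (real k - real p) / real k"
    unfolding s(2)[symmetric] r(2)[symmetric] using r(1) by (simp add: field_simps power2_eq_square)
  finally show ?thesis using E by simp
qed

lemma markov: assumes "1 \<le> p" "p \<le> k" "0 < \<sigma>" "0 < d"
  shows "prob {x\<in>space M. d\<^sup>2 \<le> (TT k x - TT p x)\<^sup>2} \<le> 2 * (real k - real p) / real k / d\<^sup>2"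
proof -
  have ge: "j \<in> {1..k} \<Longrightarrow> 1 \<le> j" for j by auto
  have "integrable M (\<lambda>x. (\<Sum>j\<in>{1..k}. (if j \<le> p then 1/(\<sigma> * sqrt k) - 1/(\<sigma> * sqrt p) else 1/(\<sigma> * sqrt k)) * V j x)\<^sup>2)"
    by (rule int_sum_sq) auto
  then have int: "integrable M (\<lambda>x. (TT k x - TT p x)\<^sup>2)"
    unfolding diff_repr[OF assms(1,2)] .
  have "prob {x\<in>space M. d\<^sup>2 \<le> (TT k x - TT p x)\<^sup>2} \<le> expectation (\<lambda>x. (TT k x - TT p x)\<^sup>2) / d\<^sup>2"
    using assms(4) by (intro integral_Markov_inequality_measure[OF int, where A="space M"]) auto
  also have "\<dots> \<le> 2 * (real k - real p) / real k / d\<^sup>2"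
    using diff_exp[OF assms(1-3)] assms(4) by (intro divide_right_mono) auto
  finally show ?thesis .
qed

end

lemma find_block:
  fixes n :: "nat \<Rightarrow> nat"
  assumes "strict_mono n" "n M0 \<le> kk"
  shows "\<exists>m\<ge>M0. n m \<le> kk \<and> kk < n (Suc m)"
proof (rule ccontr)
  assume "\<not> ?thesis"
  then have H: "m \<ge> M0 \<Longrightarrow> n m \<le> kk \<Longrightarrow> n (Suc m) \<le> kk" for m by (meson not_le)
  have "n (M0 + j) \<le> kk" for j
    by (induction j) (auto simp: assms(2) intro: H)
  moreover have "M0 + Suc kk \<le> n (M0 + Suc kk)" using seq_suble[OF assms(1)] .
  ultimately show False by (metis Suc_n_not_le_n le_add2 le_trans)
qed


theorem lemma2p4:
  fixes M :: "'a measure" and V :: "nat \<Rightarrow> 'a \<Rightarrow> real" and \<sigma> :: real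
    and N :: "'b measure" and T :: "'b \<Rightarrow> real" and n :: "nat \<Rightarrow> nat"
  assumes M: "prob_space M"
    and meas: "\<And>k. k \<ge> 1 \<Longrightarrow> V k \<in> borel_measurable M"
    and sq_int: "\<And>k. k \<ge> 1 \<Longrightarrow> integrable M (\<lambda>x. (V k x)\<^sup>2)"
    and mean0: "\<And>k. k \<ge> 1 \<Longrightarrow> prob_space.expectation M (V k) = 0"
    and var: "\<And>k. k \<ge> 1 \<Longrightarrow> prob_space.variance M (V k) = \<sigma>\<^sup>2"
    and uncorr: "\<And>i j. i \<ge> 1 \<Longrightarrow> j \<ge> 1 \<Longrightarrow> i \<noteq> j \<Longrightarrow>
        prob_space.expectation M (\<lambda>x. (V i x - prob_space.expectation M (V i)) *
                                       (V j x - prob_space.expectation M (V j))) = 0"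
    and sigma_pos: "0 < \<sigma>"
    and N: "prob_space N" and T_meas: "T \<in> borel_measurable N"
    and n_mono: "strict_mono n" and n_pos: "n 0 \<ge> 1"
    and n_ratio: "(\<lambda>m. real (n (Suc m)) / real (n m)) \<longlonglongrightarrow> 1"
    and sub_conv: "weak_conv_m (\<lambda>m. distr M borel (norm_partial_sum \<sigma> V (n m))) (distr N borel T)"
  shows "weak_conv_m (\<lambda>k. distr M borel (norm_partial_sum \<sigma> V (Suc k))) (distr N borel T)"
  
proof -
  interpret unc M V \<sigma>
    using M meas sq_int mean0 var uncorr by (intro unc.intro unc_axioms.intro) auto
  define F where "F = cdf (distr N borel T)"
  interpret NN: real_distribution "distr N borel T"
    using prob_space.real_distribution_distr[OF N T_meas] .
  have monoF: "mono F" unfolding mono_def F_def using NN.cdf_nondecreasing by auto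
  have G: "(\<lambda>m. prob {w\<in>space M. TT (n m) w \<le> y}) \<longlonglongrightarrow> F y" if "isCont F y" for y
    using sub_conv that unfolding weak_conv_m_def weak_conv_def F_def
    by (simp add: cdf_eq)
  show ?thesis
    unfolding weak_conv_m_def weak_conv_def F_def[symmetric]
  proof (intro allI impI)
    fix x assume cx: "isCont F x"
    show "(\<lambda>k. cdf (distr M borel (TT (Suc k))) x) \<longlonglongrightarrow> F x"
      unfolding cdf_eq[OF TT_meas]
    proof (rule LIMSEQ_I)
      fix \<epsilon> :: real assume e: "0 < \<epsilon>"
      have e4: "0 < \<epsilon>/4" using e by simp
      obtain d where d: "d > 0" "\<And>y. y \<noteq> x \<Longrightarrow> \<bar>y - x\<bar> < d \<Longrightarrow> \<bar>F y - F x\<bar> < \<epsilon>/4"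
        using LIM_D[OF cx[unfolded isCont_def], of "\<epsilon>/4"] e by auto
      obtain y1 where y1: "y1 \<in> {x<..<x+d}" "isCont F y1"
        using open_minus_countable[OF mono_ctble_discont[OF monoF], of "{x<..<x+d}"] d by auto
      obtain y2 where y2: "y2 \<in> {x-d<..<x}" "isCont F y2"
        using open_minus_countable[OF mono_ctble_discont[OF monoF], of "{x-d<..<x}"] d by auto
      define d1 where "d1 = y1 - x"
      define d2 where "d2 = x - y2"
      have d12: "d1 > 0" "d2 > 0" using y1 y2 unfolding d1_def d2_def by auto
      have "\<bar>F y1 - F x\<bar> < \<epsilon>/4" using d(2)[of y1] y1 by auto
      then have Fy1: "F y1 < F x + \<epsilon>/4" by linarith
      have "\<bar>F y2 - F x\<bar> < \<epsilon>/4" using d(2)[of y2] y2 by auto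
      then have Fy2: "F y2 > F x - \<epsilon>/4" by linarith
      define e where "e = (\<lambda>m. 2 * (real (n (Suc m)) / real (n m) - 1))"
      have "(\<lambda>m. e m / d1\<^sup>2) \<longlonglongrightarrow> 2 * (1 - 1) / d1\<^sup>2"
        unfolding e_def using d12 by (intro tendsto_intros n_ratio) auto
      then have t1: "(\<lambda>m. e m / d1\<^sup>2) \<longlonglongrightarrow> 0" by simp
      obtain M3 where M3: "\<forall>m\<ge>M3. norm (e m / d1\<^sup>2 - 0) < \<epsilon>/4"
        using LIMSEQ_D[OF t1 e4] by blast
      have "(\<lambda>m. e m / d2\<^sup>2) \<longlonglongrightarrow> 2 * (1 - 1) / d2\<^sup>2"
        unfolding e_def using d12 by (intro tendsto_intros n_ratio) auto
      then have t2: "(\<lambda>m. e m / d2\<^sup>2) \<longlonglongrightarrow> 0" by simp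
      obtain M4 where M4: "\<forall>m\<ge>M4. norm (e m / d2\<^sup>2 - 0) < \<epsilon>/4"
        using LIMSEQ_D[OF t2 e4] by blast
      obtain M1 where M1: "\<forall>m\<ge>M1. norm (prob {w\<in>space M. TT (n m) w \<le> y1} - F y1) < \<epsilon>/4"
        using LIMSEQ_D[OF G[OF y1(2)], of "\<epsilon>/4"] e by auto
      obtain M2 where M2: "\<forall>m\<ge>M2. norm (prob {w\<in>space M. TT (n m) w \<le> y2} - F y2) < \<epsilon>/4"
        using LIMSEQ_D[OF G[OF y2(2)], of "\<epsilon>/4"] e by auto
      define M0 where "M0 = max (max M1 M2) (max M3 M4)"
      show "\<exists>no. \<forall>k\<ge>no. norm (prob {w\<in>space M. TT (Suc k) w \<le> x} - F x) < \<epsilon>"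
      proof (intro exI allI impI)
        fix k assume "n M0 \<le> k"
        then have "n M0 \<le> Suc k" by simp
        then obtain m where m: "m \<ge> M0" "n m \<le> Suc k" "Suc k < n (Suc m)"
          using find_block[OF n_mono] by blast
        define p where "p = n m"
        have p1: "1 \<le> p" unfolding p_def using n_pos strict_mono_less_eq[OF n_mono, of 0 m] by simp
        have pk: "p \<le> Suc k" using m p_def by simp
        have "(real (Suc k) - p) / real (Suc k) \<le> (real (Suc k) - p) / p"
          using p1 pk by (intro divide_left_mono) auto
        also have "\<dots> \<le> (real (n (Suc m)) - p) / p"
          using p1 m by (intro divide_right_mono) auto
        also have "\<dots> = real (n (Suc m)) / real (n m) - 1"
          using p1 unfolding p_def by (simp add: field_simps)
        finally have "2 * ((real (Suc k) - p) / real (Suc k)) \<le> e m" unfolding e_def by (simp only: mult_le_cancel_left_pos)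
        then have rb: "2 * (real (Suc k) - p) / real (Suc k) \<le> e m" by simp
        have b1: "prob {x\<in>space M. d1\<^sup>2 \<le> (TT (Suc k) x - TT p x)\<^sup>2} < \<epsilon>/4"
        proof -
          have "prob {x\<in>space M. d1\<^sup>2 \<le> (TT (Suc k) x - TT p x)\<^sup>2} \<le> 2 * (real (Suc k) - p) / real (Suc k) / d1\<^sup>2"
            by (rule markov[OF p1 pk sigma_pos d12(1)])
          also have "\<dots> \<le> e m / d1\<^sup>2" using rb by (intro divide_right_mono) auto
          also have "\<dots> < \<epsilon>/4" proof -
            have "m \<ge> M3" using m(1) unfolding M0_def by simp
            then have "norm (e m / d1\<^sup>2 - 0) < \<epsilon>/4" using M3 by blast
            then show ?thesis using abs_ge_self[of "e m / d1\<^sup>2"] by (simp only: real_norm_def diff_zero; linarith)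
          qed
          finally show ?thesis .
        qed
        have b2: "prob {x\<in>space M. d2\<^sup>2 \<le> (TT (Suc k) x - TT p x)\<^sup>2} < \<epsilon>/4"
        proof -
          have "prob {x\<in>space M. d2\<^sup>2 \<le> (TT (Suc k) x - TT p x)\<^sup>2} \<le> 2 * (real (Suc k) - p) / real (Suc k) / d2\<^sup>2"
            by (rule markov[OF p1 pk sigma_pos d12(2)])
          also have "\<dots> \<le> e m / d2\<^sup>2" using rb by (intro divide_right_mono) auto
          also have "\<dots> < \<epsilon>/4" proof -
            have "m \<ge> M4" using m(1) unfolding M0_def by simp
            then have "norm (e m / d2\<^sup>2 - 0) < \<epsilon>/4" using M4 by blast
            then show ?thesis using abs_ge_self[of "e m / d2\<^sup>2"] by (simp only: real_norm_def diff_zero; linarith)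
          qed
          finally show ?thesis .
        qed
        have u: "prob {w\<in>space M. TT (Suc k) w \<le> x} \<le> prob {w\<in>space M. TT p w \<le> y1} + prob {w\<in>space M. d1\<^sup>2 \<le> (TT (Suc k) w - TT p w)\<^sup>2}"
          using ev1[OF d12(1), of "Suc k" x p] unfolding d1_def by simp
        have l: "prob {w\<in>space M. TT p w \<le> y2} \<le> prob {w\<in>space M. TT (Suc k) w \<le> x} + prob {w\<in>space M. d2\<^sup>2 \<le> (TT (Suc k) w - TT p w)\<^sup>2}"
          using ev2[OF d12(2), of p x "Suc k"] unfolding d2_def by simp
        have g1: "prob {w\<in>space M. TT p w \<le> y1} < F y1 + \<epsilon>/4" proof -
            have "m \<ge> M1" using m(1) unfolding M0_def by simp
            then have "norm (prob {w\<in>space M. TT (n m) w \<le> y1} - F y1) < \<epsilon>/4" using M1 by blast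
            then show ?thesis unfolding p_def by (simp only: real_norm_def abs_less_iff; linarith)
          qed
        have g2: "prob {w\<in>space M. TT p w \<le> y2} > F y2 - \<epsilon>/4" proof -
            have "m \<ge> M2" using m(1) unfolding M0_def by simp
            then have "norm (prob {w\<in>space M. TT (n m) w \<le> y2} - F y2) < \<epsilon>/4" using M2 by blast
            then show ?thesis unfolding p_def by (simp only: real_norm_def abs_less_iff; linarith)
          qed
        show "norm (prob {w\<in>space M. TT (Suc k) w \<le> x} - F x) < \<epsilon>"
          using u l g1 g2 b1 b2 Fy1 Fy2 by simp
      qed
    qed
  qed
qed
end
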